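(* Let $(\mathfrak{A},\mathfrak{A}_0)$ be a *-semisimple CQ*-algebra as in the context, let $X\in\mathfrak{A}$ and $\alpha\in\mathbb{C}$. The following are equivalent: (i) $\alpha$ is a generalized eigenvalue of $X$; (ii) there exist a nonzero $\varphi\in\mathcal{P}_{\mathfrak{A}_0}(\mathfrak{A})$ and $A\in\mathfrak{A}_0$ with $\varphi(A,A)>0$ such that $\varphi(XA-\alpha A,XA-\alpha A)=0$; (iii) there exists a nonzero $\varphi\in\mathcal{P}_{\mathfrak{A}_0}(\mathfrak{A})$ such that $\mathrm{Ker}(\pi_\varphi(X)-\alpha I_\varphi)\neq\{0\}$, where $\pi_\varphi$ is the GNS representation of $\varphi$.
   Context: Let $\mathfrak{A}_0$ be a unital C*-algebra with C*-norm $\|\cdot\|_0$ and unit $I$, and $\|\cdot\|$ another norm on $\mathfrak{A}_0$ with $\|A\|\le\|A\|_0$, $\|AB\|\le\|A\|\,\|B\|_0$, $\|A^*\|=\|A\|$. $\mathfrak{A}$ is the $\|\cdot\|$-completion of $\mathfrak{A}_0$, with $XA,AX,X^*$ ($X\in\mathfrak{A},A\in\mathfrak{A}_0$) defined as $\|\cdot\|$-limits of $A_nA$, $AA_n$, $A_n^*$ for $A_n\in\mathfrak{A}_0$, $A_n\to X$. $\mathcal{P}_{\mathfrak{A}_0}(\mathfrak{A})$ is the set of sesquilinear forms $\varphi$ on $\mathfrak{A}\times\mathfrak{A}$ such that (i) $\varphi(X,X)\ge0$ for all $X\in\mathfrak{A}$; (ii) $\varphi(XA,B)=\varphi(A,X^*B)$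 for all $X\in\mathfrak{A}$, $A,B\in\mathfrak{A}_0$; (iii) there is $\gamma>0$ with $|\varphi(X,Y)|\le\gamma\|X\|\|Y\|$ for all $X,Y$. $\mathcal{S}_{\mathfrak{A}_0}(\mathfrak{A})$ is the subset where one can take $\gamma\le1$. The CQ*-algebra is *-semisimple if for every $X\neq0$ there is $\varphi\in\mathcal{S}_{\mathfrak{A}_0}(\mathfrak{A})$ with $\varphi(X,X)>0$. GNS construction of $\varphi\in\mathcal{P}_{\mathfrak{A}_0}(\mathfrak{A})$: a Hilbert space $\mathcal{H}_\varphi$, a linear map $\lambda_\varphi:\mathfrak{A}_0\to\mathcal{H}_\varphi$ with dense range $\mathcal{D}_\varphi=\lambda_\varphi(\mathfrak{A}_0)$ and $(\lambda_\varphi(A)|\lambda_\varphi(B))=\varphi(A,B)$, and for each $X\in\mathfrak{A}$ a linear operator $\pi_\varphi(X):\mathcal{D}_\varphi\to\mathcal{H}_\varphi$ such that $\varphi(XA,YB)=(\pi_\varphi(X)\lambda_\varphi(A)|\pi_\varphi(Y)\lambda_\varphi(B))$ for all $X,Y\in\mathfrak{A}$, $A,B\in\mathfrak{A}_0$ (in particular $(\pi_\varphi(X)\lambda_\varphi(A)|\lambda_\varphi(B))=\varphi(XA,B)$); $I_\varphi$ is the identity of $\mathcal{D}_\varphi$, and $\mathrm{Ker}(\pi_\varphi(X)-\alpha I_\varphi)=\{\xi\in\mathcal{D}_\varphi:\pi_\varphi(X)\xi=\alpha\xi\}$. A complex number $\alpha$ is a generalized eigenvalue of $X\in\mathfrak{A}$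 if there exist a nonzero $\varphi\in\mathcal{P}_{\mathfrak{A}_0}(\mathfrak{A})$ (a generalized eigenvector of $X$) and $A\in\mathfrak{A}_0$ such that $\varphi(A,A)>0$ and $\varphi(XA-\alpha A,B)=0$ for all $B\in\mathfrak{A}_0$. *)

theory Defs
  imports "HOL-Analysis.Analysis" "HOL-Library.Complex_Order"
begin

text \<open>The completion A is modelled by a Banach space type 'a (its norm is the norm
  of the paper), A0 by a dense subset of it.\<close>

record 'a cqs =
  cq_A0   :: "'a set"
  cq_n0   :: "'a \<Rightarrow> real"
  cq_sc   :: "complex \<Rightarrow> 'a \<Rightarrow> 'a"
  cq_mul  :: "'a \<Rightarrow> 'a \<Rightarrow> 'a"
  cq_star :: "'a \<Rightarrow> 'a"
  cq_one  :: 'a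

definition cq_algebra :: "('a::banach) cqs \<Rightarrow> bool" where
  "cq_algebra Q \<longleftrightarrow>
    (let A0 = cq_A0 Q; n0 = cq_n0 Q; sc = cq_sc Q; mul = cq_mul Q; st = cq_star Q; I = cq_one Q in
     \<comment> \<open>complex vector space structure on A, compatible with the real one and the norm\<close>
     (\<forall>a b x. sc a (sc b x) = sc (a * b) x) \<and> (\<forall>x. sc 1 x = x) \<and>
     (\<forall>a x y. sc a (x + y) = sc a x + sc a y) \<and> (\<forall>a b x. sc (a + b) x = sc a x + sc b x) \<and>
     (\<forall>r x. sc (complex_of_real r) x = r *\<^sub>R x) \<and>
     (\<forall>a x. norm (sc a x) = cmod a * norm x) \<and>
     \<comment> \<open>A0 is a dense complex subspace of A (A is the norm-completion of A0)\<close>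
     0 \<in> A0 \<and> (\<forall>x\<in>A0. \<forall>y\<in>A0. x + y \<in> A0) \<and> (\<forall>a. \<forall>x\<in>A0. sc a x \<in> A0) \<and>
     closure A0 = UNIV \<and>
     \<comment> \<open>A0 is a unital *-algebra\<close>
     I \<in> A0 \<and>
     (\<forall>x\<in>A0. \<forall>y\<in>A0. mul x y \<in> A0) \<and> (\<forall>x\<in>A0. st x \<in> A0) \<and>
     (\<forall>x\<in>A0. \<forall>y\<in>A0. \<forall>z\<in>A0. mul (mul x y) z = mul x (mul y z)) \<and>
     (\<forall>x\<in>A0. \<forall>y\<in>A0. \<forall>z\<in>A0. mul (x + y) z = mul x z + mul y z \<and> mul z (x + y) = mul z x + mul z y) \<and>
     (\<forall>a. \<forall>x\<in>A0. \<forall>y\<in>A0. mul (sc a x) y = sc a (mul x y) \<and> mul x (sc a y) = sc a (mul x y)) \<and>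
     (\<forall>x\<in>A0. mul I x = x \<and> mul x I = x) \<and>
     (\<forall>x\<in>A0. st (st x) = x) \<and> (\<forall>x\<in>A0. \<forall>y\<in>A0. st (x + y) = st x + st y) \<and>
     (\<forall>a. \<forall>x\<in>A0. st (sc a x) = sc (cnj a) (st x)) \<and>
     (\<forall>x\<in>A0. \<forall>y\<in>A0. st (mul x y) = mul (st y) (st x)) \<and>
     \<comment> \<open>n0 is a complete C*-norm on A0\<close>
     (\<forall>x\<in>A0. 0 \<le> n0 x \<and> (n0 x = 0 \<longleftrightarrow> x = 0)) \<and>
     (\<forall>x\<in>A0. \<forall>y\<in>A0. n0 (x + y) \<le> n0 x + n0 y) \<and>
     (\<forall>a. \<forall>x\<in>A0. n0 (sc a x) = cmod a * n0 x) \<and>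
     (\<forall>x\<in>A0. \<forall>y\<in>A0. n0 (mul x y) \<le> n0 x * n0 y) \<and>
     (\<forall>x\<in>A0. n0 (mul (st x) x) = (n0 x)\<^sup>2) \<and>
     (\<forall>s. (\<forall>n. s n \<in> A0) \<and> (\<forall>e>0. \<exists>N. \<forall>m\<ge>N. \<forall>n\<ge>N. n0 (s m - s n) < e)
          \<longrightarrow> (\<exists>x\<in>A0. (\<lambda>n. n0 (s n - x)) \<longlonglongrightarrow> 0)) \<and>
     \<comment> \<open>compatibility of the two norms\<close>
     (\<forall>x\<in>A0. norm x \<le> n0 x) \<and>
     (\<forall>x\<in>A0. \<forall>y\<in>A0. norm (mul x y) \<le> norm x * n0 y) \<and>
     (\<forall>x\<in>A0. norm (st x) = norm x) \<and>
     \<comment> \<open>XA, AX, X* for X in A are the norm-limits of A_n A, A A_n, A_n*\<close>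
     (\<forall>X. \<forall>A\<in>A0. \<forall>s. (\<forall>n. s n \<in> A0) \<and> s \<longlonglongrightarrow> X \<longrightarrow>
          (\<lambda>n. mul (s n) A) \<longlonglongrightarrow> mul X A \<and> (\<lambda>n. mul A (s n)) \<longlonglongrightarrow> mul A X) \<and>
     (\<forall>X s. (\<forall>n. s n \<in> A0) \<and> s \<longlonglongrightarrow> X \<longrightarrow> (\<lambda>n. st (s n)) \<longlonglongrightarrow> st X))"

definition sesquilinear :: "'a cqs \<Rightarrow> ('a::banach \<Rightarrow> 'a \<Rightarrow> complex) \<Rightarrow> bool" where
  "sesquilinear Q \<phi> \<longleftrightarrow>
    (\<forall>x y z. \<phi> (x + y) z = \<phi> x z + \<phi> y z) \<and>
    (\<forall>a x z. \<phi> (cq_sc Q a x) z = a * \<phi> x z) \<and>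
    (\<forall>x y z. \<phi> x (y + z) = \<phi> x y + \<phi> x z) \<and>
    (\<forall>a x z. \<phi> x (cq_sc Q a z) = cnj a * \<phi> x z)"

definition P_forms :: "('a::banach) cqs \<Rightarrow> ('a \<Rightarrow> 'a \<Rightarrow> complex) set" where
  "P_forms Q = {\<phi>. sesquilinear Q \<phi> \<and>
      (\<forall>X. 0 \<le> \<phi> X X) \<and>
      (\<forall>X. \<forall>A\<in>cq_A0 Q. \<forall>B\<in>cq_A0 Q. \<phi> (cq_mul Q X A) B = \<phi> A (cq_mul Q (cq_star Q X) B)) \<and>
      (\<exists>\<gamma>>0. \<forall>X Y. cmod (\<phi> X Y) \<le> \<gamma> * norm X * norm Y)}"

definition S_forms :: "('a::banach) cqs \<Rightarrow> ('a \<Rightarrow> 'a \<Rightarrow> complex) set" where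
  "S_forms Q = {\<phi>. sesquilinear Q \<phi> \<and>
      (\<forall>X. 0 \<le> \<phi> X X) \<and>
      (\<forall>X. \<forall>A\<in>cq_A0 Q. \<forall>B\<in>cq_A0 Q. \<phi> (cq_mul Q X A) B = \<phi> A (cq_mul Q (cq_star Q X) B)) \<and>
      (\<exists>\<gamma>>0. \<gamma> \<le> 1 \<and> (\<forall>X Y. cmod (\<phi> X Y) \<le> \<gamma> * norm X * norm Y))}"

definition star_semisimple :: "('a::banach) cqs \<Rightarrow> bool" where
  "star_semisimple Q \<longleftrightarrow> (\<forall>X. X \<noteq> 0 \<longrightarrow> (\<exists>\<phi>\<in>S_forms Q. 0 < \<phi> X X))"

definition gen_eigenvalue :: "('a::banach) cqs \<Rightarrow> 'a \<Rightarrow> complex \<Rightarrow> bool" where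
  "gen_eigenvalue Q X \<alpha> \<longleftrightarrow>
    (\<exists>\<phi>\<in>P_forms Q. \<phi> \<noteq> (\<lambda>_ _. 0) \<and>
      (\<exists>A\<in>cq_A0 Q. 0 < \<phi> A A \<and>
         (\<forall>B\<in>cq_A0 Q. \<phi> (cq_mul Q X A - cq_sc Q \<alpha> A) B = 0)))"

text \<open>A complex Hilbert space is represented by a carrier H of complex-valued functions on
  'a with the pointwise linear operations and an inner product ip (linear in the first,
  conjugate linear in the second argument).  Every GNS Hilbert space of a form in P_forms
  admits such a realization, via xi |-> (B |-> (xi | lambda(B))).\<close>

definition hadd :: "('a \<Rightarrow> complex) \<Rightarrow> ('a \<Rightarrow> complex) \<Rightarrow> ('a \<Rightarrow> complex)" where
  "hadd f g = (\<lambda>b. f b + g b)"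

definition hscale :: "complex \<Rightarrow> ('a \<Rightarrow> complex) \<Rightarrow> ('a \<Rightarrow> complex)" where
  "hscale c f = (\<lambda>b. c * f b)"

definition hzero :: "'a \<Rightarrow> complex" where
  "hzero = (\<lambda>_. 0)"

definition hnorm :: "(('a \<Rightarrow> complex) \<Rightarrow> ('a \<Rightarrow> complex) \<Rightarrow> complex) \<Rightarrow> ('a \<Rightarrow> complex) \<Rightarrow> real" where
  "hnorm ip x = sqrt (Re (ip x x))"

definition complex_hilbert ::
  "('a \<Rightarrow> complex) set \<Rightarrow> (('a \<Rightarrow> complex) \<Rightarrow> ('a \<Rightarrow> complex) \<Rightarrow> complex) \<Rightarrow> bool" where
  "complex_hilbert H ip \<longleftrightarrow>
     hzero \<in> H \<and> (\<forall>x\<in>H. \<forall>y\<in>H. hadd x y \<in> H) \<and> (\<forall>c. \<forall>x\<in>H. hscale c x \<in> H) \<and>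
     (\<forall>x\<in>H. \<forall>y\<in>H. \<forall>z\<in>H. ip (hadd x y) z = ip x z + ip y z) \<and>
     (\<forall>c. \<forall>x\<in>H. \<forall>y\<in>H. ip (hscale c x) y = c * ip x y) \<and>
     (\<forall>x\<in>H. \<forall>y\<in>H. ip x y = cnj (ip y x)) \<and>
     (\<forall>x\<in>H. 0 \<le> ip x x \<and> (ip x x = 0 \<longrightarrow> x = hzero)) \<and>
     (\<forall>s. (\<forall>n. s n \<in> H) \<and>
          (\<forall>e>0. \<exists>N. \<forall>m\<ge>N. \<forall>n\<ge>N. hnorm ip (hadd (s m) (hscale (-1) (s n))) < e)
          \<longrightarrow> (\<exists>x\<in>H. (\<lambda>n. hnorm ip (hadd (s n) (hscale (-1) x))) \<longlonglongrightarrow> 0))"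

definition is_gns ::
  "('a::banach) cqs \<Rightarrow> ('a \<Rightarrow> 'a \<Rightarrow> complex) \<Rightarrow> ('a \<Rightarrow> complex) set \<Rightarrow>
   (('a \<Rightarrow> complex) \<Rightarrow> ('a \<Rightarrow> complex) \<Rightarrow> complex) \<Rightarrow>
   ('a \<Rightarrow> ('a \<Rightarrow> complex)) \<Rightarrow> ('a \<Rightarrow> ('a \<Rightarrow> complex) \<Rightarrow> ('a \<Rightarrow> complex)) \<Rightarrow> bool" where
  "is_gns Q \<phi> H ip lam rep \<longleftrightarrow>
     (let A0 = cq_A0 Q in
      complex_hilbert H ip \<and>
      (\<forall>A\<in>A0. lam A \<in> H) \<and>
      (\<forall>A\<in>A0. \<forall>B\<in>A0. lam (A + B) = hadd (lam A) (lam B)) \<and>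
      (\<forall>c. \<forall>A\<in>A0. lam (cq_sc Q c A) = hscale c (lam A)) \<and>
      (\<forall>\<xi>\<in>H. \<forall>e>0. \<exists>A\<in>A0. hnorm ip (hadd \<xi> (hscale (-1) (lam A))) < e) \<and>
      (\<forall>A\<in>A0. \<forall>B\<in>A0. ip (lam A) (lam B) = \<phi> A B) \<and>
      (\<forall>X. \<forall>\<xi>\<in>lam ` A0. rep X \<xi> \<in> H) \<and>
      (\<forall>X. \<forall>\<xi>\<in>lam ` A0. \<forall>\<eta>\<in>lam ` A0. rep X (hadd \<xi> \<eta>) = hadd (rep X \<xi>) (rep X \<eta>)) \<and>
      (\<forall>X c. \<forall>\<xi>\<in>lam ` A0. rep X (hscale c \<xi>) = hscale c (rep X \<xi>)) \<and>
      (\<forall>X Y. \<forall>A\<in>A0. \<forall>B\<in>A0.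
          ip (rep X (lam A)) (rep Y (lam B)) = \<phi> (cq_mul Q X A) (cq_mul Q Y B)) \<and>
      (\<forall>X. \<forall>A\<in>A0. \<forall>B\<in>A0. ip (rep X (lam A)) (lam B) = \<phi> (cq_mul Q X A) B))"

definition gns_ker ::
  "('a::banach) cqs \<Rightarrow> ('a \<Rightarrow> ('a \<Rightarrow> complex)) \<Rightarrow> ('a \<Rightarrow> ('a \<Rightarrow> complex) \<Rightarrow> ('a \<Rightarrow> complex)) \<Rightarrow>
   'a \<Rightarrow> complex \<Rightarrow> ('a \<Rightarrow> complex) set" where
  "gns_ker Q lam rep X \<alpha> = {\<xi> \<in> lam ` cq_A0 Q. rep X \<xi> = hscale \<alpha> \<xi>}"

end

theory Submission
  imports Defs
begin



lemma cq_sc_real: "cq_algebra Q \<Longrightarrow> cq_sc Q (complex_of_real r) x = r *\<^sub>R x"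
  by (simp add: cq_algebra_def Let_def)
lemma cq_sc_add: "cq_algebra Q \<Longrightarrow> cq_sc Q a (x + y) = cq_sc Q a x + cq_sc Q a y"
  by (simp add: cq_algebra_def Let_def)
lemma cq_sc_norm: "cq_algebra Q \<Longrightarrow> norm (cq_sc Q a x) = cmod a * norm x"
  by (simp add: cq_algebra_def Let_def)
lemma cq_sc_m1: "cq_algebra Q \<Longrightarrow> cq_sc Q (-1) x = - x"
  using cq_sc_real[of Q "-1" x] by simp
lemma cq_sc_0: "cq_algebra Q \<Longrightarrow> cq_sc Q 0 x = 0"
  using cq_sc_real[of Q "0" x] by simp
lemma cq_sc_diff: "cq_algebra Q \<Longrightarrow> cq_sc Q a (x - y) = cq_sc Q a x - cq_sc Q a y"
  using cq_sc_add[of Q a "x - y" y] by (simp add: algebra_simps)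
lemma cq_A0_facts: assumes "cq_algebra Q"
  shows "0 \<in> cq_A0 Q" "\<And>x y. x \<in> cq_A0 Q \<Longrightarrow> y \<in> cq_A0 Q \<Longrightarrow> x + y \<in> cq_A0 Q"
   "\<And>a x. x \<in> cq_A0 Q \<Longrightarrow> cq_sc Q a x \<in> cq_A0 Q" "closure (cq_A0 Q) = UNIV"
   "\<And>x. x \<in> cq_A0 Q \<Longrightarrow> cq_star Q x \<in> cq_A0 Q"
  using assms unfolding cq_algebra_def Let_def by auto
lemma cq_A0_diff: "cq_algebra Q \<Longrightarrow> x \<in> cq_A0 Q \<Longrightarrow> y \<in> cq_A0 Q \<Longrightarrow> x - y \<in> cq_A0 Q"
  using cq_A0_facts(2)[of Q x "cq_sc Q (-1) y"] cq_A0_facts(3)[of Q y "-1"] cq_sc_m1[of Q y] by simp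
lemma cq_mul_A0: "cq_algebra Q \<Longrightarrow> x \<in> cq_A0 Q \<Longrightarrow> y \<in> cq_A0 Q \<Longrightarrow> cq_mul Q x y \<in> cq_A0 Q"
  by (simp add: cq_algebra_def Let_def)
lemma cq_mul_distrib: "cq_algebra Q \<Longrightarrow> x \<in> cq_A0 Q \<Longrightarrow> y \<in> cq_A0 Q \<Longrightarrow> z \<in> cq_A0 Q \<Longrightarrow>
   cq_mul Q z (x + y) = cq_mul Q z x + cq_mul Q z y"
  by (simp add: cq_algebra_def Let_def)
lemma cq_mul_sc: "cq_algebra Q \<Longrightarrow> x \<in> cq_A0 Q \<Longrightarrow> y \<in> cq_A0 Q \<Longrightarrow>
   cq_mul Q x (cq_sc Q a y) = cq_sc Q a (cq_mul Q x y)"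
  by (simp add: cq_algebra_def Let_def)
lemma cq_mul_lim: "cq_algebra Q \<Longrightarrow> A \<in> cq_A0 Q \<Longrightarrow> (\<forall>n. s n \<in> cq_A0 Q) \<Longrightarrow> s \<longlonglongrightarrow> X \<Longrightarrow>
   (\<lambda>n. cq_mul Q (s n) A) \<longlonglongrightarrow> cq_mul Q X A"
  by (simp add: cq_algebra_def Let_def)

lemma cq_sc_tendsto: assumes "cq_algebra Q" "f \<longlonglongrightarrow> x" shows "(\<lambda>n. cq_sc Q a (f n)) \<longlonglongrightarrow> cq_sc Q a x"
proof -
  have "(\<lambda>n. norm (f n - x)) \<longlonglongrightarrow> 0" using tendsto_norm_zero[OF LIM_zero[OF assms(2)]] .
  hence "(\<lambda>n. cmod a * norm (f n - x)) \<longlonglongrightarrow> 0" by (simp add: tendsto_mult_right_zero)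
  hence "(\<lambda>n. norm (cq_sc Q a (f n) - cq_sc Q a x)) \<longlonglongrightarrow> 0"
    using cq_sc_norm[OF assms(1)] cq_sc_diff[OF assms(1), symmetric] by simp
  thus ?thesis by (simp add: tendsto_norm_zero_iff LIM_zero_cancel)
qed

lemma A0_seq: assumes "cq_algebra Q" obtains s where "\<forall>n. s n \<in> cq_A0 Q" "s \<longlonglongrightarrow> X"
proof -
  have "X \<in> closure (cq_A0 Q)" using cq_A0_facts(4)[OF assms] by simp
  thus ?thesis using that closure_sequential by blast
qed

lemma mul_lin_add: assumes "cq_algebra Q" "A \<in> cq_A0 Q" "B \<in> cq_A0 Q"
  shows "cq_mul Q X (A + B) = cq_mul Q X A + cq_mul Q X B"
proof -
  obtain s where s: "\<forall>n. s n \<in> cq_A0 Q" "s \<longlonglongrightarrow> X" using A0_seq[OF assms(1)] by blast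
  have "(\<lambda>n. cq_mul Q (s n) (A + B)) \<longlonglongrightarrow> cq_mul Q X (A + B)"
    using cq_mul_lim[OF assms(1) _ s] cq_A0_facts(2)[OF assms(1) assms(2,3)] by blast
  moreover have "(\<lambda>n. cq_mul Q (s n) (A + B)) \<longlonglongrightarrow> cq_mul Q X A + cq_mul Q X B"
    using tendsto_add[OF cq_mul_lim[OF assms(1) assms(2) s] cq_mul_lim[OF assms(1) assms(3) s]]
      cq_mul_distrib[OF assms(1) assms(2,3)] s(1) by simp
  ultimately show ?thesis using LIMSEQ_unique by blast
qed

lemma mul_lin_sc: assumes "cq_algebra Q" "A \<in> cq_A0 Q"
  shows "cq_mul Q X (cq_sc Q a A) = cq_sc Q a (cq_mul Q X A)"
proof -
  obtain s where s: "\<forall>n. s n \<in> cq_A0 Q" "s \<longlonglongrightarrow> X" using A0_seq[OF assms(1)] by blast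
  have "(\<lambda>n. cq_mul Q (s n) (cq_sc Q a A)) \<longlonglongrightarrow> cq_mul Q X (cq_sc Q a A)"
    using cq_mul_lim[OF assms(1) _ s] cq_A0_facts(3)[OF assms(1) assms(2)] by blast
  moreover have "(\<lambda>n. cq_mul Q (s n) (cq_sc Q a A)) \<longlonglongrightarrow> cq_sc Q a (cq_mul Q X A)"
    using cq_sc_tendsto[OF assms(1) cq_mul_lim[OF assms(1) assms(2) s]]
      cq_mul_sc[OF assms(1)] assms(2) s(1) by simp
  ultimately show ?thesis using LIMSEQ_unique by blast
qed

lemma mul_lin_diff: assumes "cq_algebra Q" "A \<in> cq_A0 Q" "B \<in> cq_A0 Q"
  shows "cq_mul Q X (A - B) = cq_mul Q X A - cq_mul Q X B"
proof -
  have "cq_mul Q X (A - B) = cq_mul Q X (A + cq_sc Q (-1) B)" using cq_sc_m1[OF assms(1)] by simp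
  also have "\<dots> = cq_mul Q X A + cq_sc Q (-1) (cq_mul Q X B)"
    using mul_lin_add[OF assms(1,2) cq_A0_facts(3)[OF assms(1,3)]] mul_lin_sc[OF assms(1,3)] by simp
  also have "\<dots> = cq_mul Q X A - cq_mul Q X B" using cq_sc_m1[OF assms(1)] by simp
  finally show ?thesis .
qed




definition pn :: "('a \<Rightarrow> 'a \<Rightarrow> complex) \<Rightarrow> 'a \<Rightarrow> real" where
  "pn \<phi> x = sqrt (Re (\<phi> x x))"

lemma quad_lemma:
  fixes P R m :: real
  assumes "\<And>t. 0 \<le> P - 2*t*m + t^2*m*R" "0 \<le> m" "0 \<le> R"
  shows "m \<le> P * R"
proof -
  have P0: "0 \<le> P" using assms(1)[of 0] by simp
  show ?thesis
  proof (cases "m = 0")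
    case True thus ?thesis using P0 assms(3) by simp
  next
    case False
    hence m: "m > 0" using assms(2) by simp
    show ?thesis
    proof (cases "R = 0")
      case True
      have "0 \<le> P - 2*((P+1)/(2*m))*m" using assms(1)[of "(P+1)/(2*m)"] True by simp
      also have "\<dots> = -1" using m by (simp add: field_simps)
      finally show ?thesis by simp
    next
      case False
      hence R: "R > 0" using assms(3) by simp
      have "0 \<le> P - 2*(1/R)*m + (1/R)^2*m*R" using assms(1) by blast
      also have "\<dots> = P - m / R" using R by (simp add: field_simps power2_eq_square)
      finally have "m / R \<le> P" by simp
      thus ?thesis using R by (simp add: field_simps)
    qed
  qed
qed

context
  fixes Q :: "('a::banach) cqs" and \<phi>
  assumes cq: "cq_algebra Q" and P: "\<phi> \<in> P_forms Q"
begin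

lemma ph_sesq: "sesquilinear Q \<phi>" using P unfolding P_forms_def by blast
lemma ph_addL: "\<phi> (x + y) z = \<phi> x z + \<phi> y z" using ph_sesq unfolding sesquilinear_def by blast
lemma ph_addR: "\<phi> x (y + z) = \<phi> x y + \<phi> x z" using ph_sesq unfolding sesquilinear_def by blast
lemma ph_scL: "\<phi> (cq_sc Q a x) z = a * \<phi> x z" using ph_sesq unfolding sesquilinear_def by blast
lemma ph_scR: "\<phi> x (cq_sc Q a z) = cnj a * \<phi> x z" using ph_sesq unfolding sesquilinear_def by blast
lemma ph_pos: "0 \<le> \<phi> x x" using P unfolding P_forms_def by blast
lemma ph_inv: "A \<in> cq_A0 Q \<Longrightarrow> B \<in> cq_A0 Q \<Longrightarrow> \<phi> (cq_mul Q X A) B = \<phi> A (cq_mul Q (cq_star Q X) B)"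
  using P unfolding P_forms_def by blast
lemma ph_bound: obtains \<gamma> where "\<gamma> > 0" "\<And>X Y. cmod (\<phi> X Y) \<le> \<gamma> * norm X * norm Y"
  using P unfolding P_forms_def by blast

lemma ph_negL: "\<phi> (- x) z = - \<phi> x z" using ph_scL[of "-1" x z] cq_sc_m1[OF cq] by simp
lemma ph_negR: "\<phi> x (- z) = - \<phi> x z" using ph_scR[of x "-1" z] cq_sc_m1[OF cq] by simp
lemma ph_diffL: "\<phi> (x - y) z = \<phi> x z - \<phi> y z"
  using ph_addL[of x "-y" z] ph_negL[of y z] by simp
lemma ph_diffR: "\<phi> x (y - z) = \<phi> x y - \<phi> x z"
  using ph_addR[of x y "-z"] ph_negR[of x z] by simp
lemma ph_0L: "\<phi> 0 z = 0" using ph_diffL[of 0 0 z] by simp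
lemma ph_0R: "\<phi> z 0 = 0" using ph_diffR[of z 0 0] by simp
lemma ph_Im: "Im (\<phi> x x) = 0" using ph_pos[of x] by (simp add: less_eq_complex_def)
lemma ph_Re: "0 \<le> Re (\<phi> x x)" using ph_pos[of x] by (simp add: less_eq_complex_def)
lemma ph_real: "\<phi> x x = complex_of_real (Re (\<phi> x x))" using ph_Im[of x] by (simp add: complex_eq_iff)

lemma ph_herm: "\<phi> y x = cnj (\<phi> x y)"
proof -
  have e1: "\<phi> (x + y) (x + y) = \<phi> x x + \<phi> x y + \<phi> y x + \<phi> y y"
    by (simp add: ph_addL ph_addR)
  have e2: "\<phi> (x + cq_sc Q \<i> y) (x + cq_sc Q \<i> y) = \<phi> x x - \<i> * \<phi> x y + \<i> * \<phi> y x + \<phi> y y"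
    by (simp add: ph_addL ph_addR ph_scL ph_scR algebra_simps)
  have "Im (\<phi> x y) + Im (\<phi> y x) = 0" using ph_Im[of "x+y"] ph_Im[of x] ph_Im[of y] e1 by simp
  moreover have "Re (\<phi> y x) - Re (\<phi> x y) = 0"
    using ph_Im[of "x + cq_sc Q \<i> y"] ph_Im[of x] ph_Im[of y] e2 by simp
  ultimately show ?thesis by (simp add: complex_eq_iff)
qed

lemma pn_nonneg: "0 \<le> pn \<phi> x" unfolding pn_def using ph_Re by simp
lemma pn_sq: "(pn \<phi> x)^2 = Re (\<phi> x x)" unfolding pn_def using ph_Re by simp

lemma CS: "cmod (\<phi> x y) \<le> pn \<phi> x * pn \<phi> y"
proof -
  define a where "a = \<phi> x y"
  have key: "0 \<le> Re (\<phi> x x) - 2*t*(cmod a)^2 + t^2*(cmod a)^2*Re (\<phi> y y)" for t :: real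
  proof -
    define c where "c = complex_of_real t * a"
    have "\<phi> (x - cq_sc Q c y) (x - cq_sc Q c y) = \<phi> x x - cnj c * a - c * \<phi> y x + c * (cnj c * \<phi> y y)"
      by (simp add: ph_diffL ph_diffR ph_scL ph_scR a_def algebra_simps)
    also have "\<dots> = \<phi> x x - 2 * t * (cnj a * a) + t^2 * (cnj a * a) * \<phi> y y"
      unfolding c_def ph_herm[of y x] a_def[symmetric] by (simp add: algebra_simps power2_eq_square)
    also have "\<dots> = \<phi> x x - 2 * t * (cmod a)^2 + t^2 * (cmod a)^2 * \<phi> y y"
    proof -
      have aa: "cnj a * a = (complex_of_real (cmod a))^2" using complex_norm_square[of a] by (simp add: mult.commute)
      show ?thesis unfolding aa by simp
    qed
    finally have "Re (\<phi> (x - cq_sc Q c y) (x - cq_sc Q c y)) = Re (\<phi> x x) - 2*t*(cmod a)^2 + t^2*(cmod a)^2*Re (\<phi> y y)"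
      by simp
    thus ?thesis using ph_Re by metis
  qed
  have "(cmod a)^2 \<le> Re (\<phi> x x) * Re (\<phi> y y)"
    by (rule quad_lemma[OF key]) (simp_all add: ph_Re)
  hence "sqrt ((cmod a)^2) \<le> sqrt (Re (\<phi> x x) * Re (\<phi> y y))" using real_sqrt_le_mono by blast
  thus ?thesis unfolding pn_def a_def by (simp add: real_sqrt_mult)
qed

lemma pn_add: "pn \<phi> (x + y) \<le> pn \<phi> x + pn \<phi> y"
proof -
  have "Re (\<phi> (x + y) (x + y)) = Re (\<phi> x x) + 2 * Re (\<phi> x y) + Re (\<phi> y y)"
    using ph_herm[of y x] by (simp add: ph_addL ph_addR)
  also have "\<dots> \<le> (pn \<phi> x)^2 + 2 * (pn \<phi> x * pn \<phi> y) + (pn \<phi> y)^2"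
    using CS[of x y] complex_Re_le_cmod[of "\<phi> x y"] pn_sq by simp
  also have "\<dots> = (pn \<phi> x + pn \<phi> y)^2" by (simp add: power2_eq_square algebra_simps)
  finally have "sqrt (Re (\<phi> (x + y) (x + y))) \<le> sqrt ((pn \<phi> x + pn \<phi> y)^2)" using real_sqrt_le_mono by blast
  thus ?thesis unfolding pn_def[of \<phi> "x+y"] using pn_nonneg[of x] pn_nonneg[of y] by simp
qed

lemma pn_sc: "pn \<phi> (cq_sc Q c x) = cmod c * pn \<phi> x"
proof -
  have "\<phi> (cq_sc Q c x) (cq_sc Q c x) = (cmod c)^2 * \<phi> x x"
  proof -
    have "cnj c * c = (cmod c)^2" using complex_norm_square[of c] by (simp add: mult.commute)
    thus ?thesis by (simp add: ph_scL ph_scR mult.assoc[symmetric])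
  qed
  hence "Re (\<phi> (cq_sc Q c x) (cq_sc Q c x)) = (cmod c)^2 * Re (\<phi> x x)" by simp
  thus ?thesis unfolding pn_def by (simp add: real_sqrt_mult)
qed

lemma pn_neg: "pn \<phi> (- x) = pn \<phi> x"
  using pn_sc[of "-1" x] cq_sc_m1[OF cq] by simp
lemma pn_sym: "pn \<phi> (x - y) = pn \<phi> (y - x)"
  using pn_neg[of "x - y"] by simp
lemma pn_0: "pn \<phi> 0 = 0" unfolding pn_def by (simp add: ph_0L)
lemma pn_diff_tri: "pn \<phi> (x - z) \<le> pn \<phi> (x - y) + pn \<phi> (y - z)"
  using pn_add[of "x - y" "y - z"] by simp
lemma pn_rev_tri: "\<bar>pn \<phi> x - pn \<phi> y\<bar> \<le> pn \<phi> (x - y)"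
  using pn_add[of "x - y" y] pn_add[of "y - x" x] pn_sym[of x y] by simp

lemma pn_norm: obtains C where "C > 0" "\<And>x. pn \<phi> x \<le> C * norm x"
proof -
  obtain \<gamma> where g: "\<gamma> > 0" "\<And>X Y. cmod (\<phi> X Y) \<le> \<gamma> * norm X * norm Y" using ph_bound by blast
  have h: "pn \<phi> x \<le> sqrt \<gamma> * norm x" for x
  proof -
    have "Re (\<phi> x x) \<le> \<gamma> * (norm x)^2" using g(2)[of x x] complex_Re_le_cmod[of "\<phi> x x"]
      by (simp add: power2_eq_square mult.assoc)
    hence "sqrt (Re (\<phi> x x)) \<le> sqrt (\<gamma> * (norm x)^2)" using real_sqrt_le_mono by blast
    thus ?thesis unfolding pn_def by (simp add: real_sqrt_mult)
  qed
  show ?thesis using that[of "sqrt \<gamma>", OF _ h] g(1) by simp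
qed

lemma ph_cont_zero: assumes "\<forall>B\<in>cq_A0 Q. \<phi> Z B = 0" shows "\<phi> Z B = 0"
proof -
  obtain \<gamma> where g: "\<gamma> > 0" "\<And>X Y. cmod (\<phi> X Y) \<le> \<gamma> * norm X * norm Y" using ph_bound by blast
  obtain s where s: "\<forall>n. s n \<in> cq_A0 Q" "s \<longlonglongrightarrow> B" using A0_seq[OF cq] by blast
  have "\<phi> Z B = \<phi> Z (B - s n)" for n using assms s(1) by (simp add: ph_diffR)
  hence le: "cmod (\<phi> Z B) \<le> \<gamma> * norm Z * norm (B - s n)" for n using g(2) by metis
  have "(\<lambda>n. norm (B - s n)) \<longlonglongrightarrow> 0"
    using tendsto_norm_zero[OF LIM_zero[OF s(2)]] by (simp add: norm_minus_commute)
  hence lim: "(\<lambda>n. \<gamma> * norm Z * norm (B - s n)) \<longlonglongrightarrow> 0" by (simp add: tendsto_mult_right_zero)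
  have "cmod (\<phi> Z B) \<le> 0"
    by (intro tendsto_le[OF _ lim tendsto_const]) (auto simp: le)
  thus ?thesis by simp
qed

end



definition pc :: "('a::banach \<Rightarrow> 'a \<Rightarrow> complex) \<Rightarrow> (nat \<Rightarrow> 'a) \<Rightarrow> bool" where
  "pc \<phi> s \<longleftrightarrow> (\<forall>e>0. \<exists>N. \<forall>m\<ge>N. \<forall>n\<ge>N. pn \<phi> (s m - s n) < e)"
definition repr :: "('a::banach \<Rightarrow> 'a \<Rightarrow> complex) \<Rightarrow> (nat \<Rightarrow> 'a) \<Rightarrow> ('a \<Rightarrow> complex) \<Rightarrow> bool" where
  "repr \<phi> s f \<longleftrightarrow> pc \<phi> s \<and> (\<forall>B. (\<lambda>n. \<phi> (s n) B) \<longlonglongrightarrow> f B)"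
definition HH :: "('a::banach \<Rightarrow> 'a \<Rightarrow> complex) \<Rightarrow> ('a \<Rightarrow> complex) set" where
  "HH \<phi> = {f. \<exists>s. repr \<phi> s f}"
definition rs :: "('a::banach \<Rightarrow> 'a \<Rightarrow> complex) \<Rightarrow> ('a \<Rightarrow> complex) \<Rightarrow> nat \<Rightarrow> 'a" where
  "rs \<phi> f = (SOME s. repr \<phi> s f)"
definition IP :: "('a::banach \<Rightarrow> 'a \<Rightarrow> complex) \<Rightarrow> ('a \<Rightarrow> complex) \<Rightarrow> ('a \<Rightarrow> complex) \<Rightarrow> complex" where
  "IP \<phi> f g = lim (\<lambda>n. \<phi> (rs \<phi> f n) (rs \<phi> g n))"

lemma pcD: "pc \<phi> s \<Longrightarrow> e > 0 \<Longrightarrow> \<exists>N. \<forall>m\<ge>N. \<forall>n\<ge>N. pn \<phi> (s m - s n) < e"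
  unfolding pc_def by blast

lemma rs_repr: assumes "f \<in> HH \<phi>" shows "repr \<phi> (rs \<phi> f) f"
proof -
  obtain s where "repr \<phi> s f" using assms unfolding HH_def by blast
  thus ?thesis unfolding rs_def using someI[where P="\<lambda>s. repr \<phi> s f"] by blast
qed

context
  fixes Q :: "('a::banach) cqs" and \<phi>
  assumes cq: "cq_algebra Q" and P: "\<phi> \<in> P_forms Q"
begin

lemmas ph_facts = ph_addL[OF cq P] ph_addR[OF cq P] ph_scL[OF cq P] ph_scR[OF cq P]
  ph_diffL[OF cq P] ph_diffR[OF cq P] ph_negL[OF cq P] ph_negR[OF cq P] ph_0L[OF cq P] ph_0R[OF cq P]

lemma diff_bound: "cmod (\<phi> a b - \<phi> c d) \<le> pn \<phi> (a - c) * pn \<phi> b + pn \<phi> c * pn \<phi> (b - d)"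
proof -
  have "\<phi> a b - \<phi> c d = \<phi> (a - c) b + \<phi> c (b - d)" by (simp add: ph_facts)
  hence "cmod (\<phi> a b - \<phi> c d) \<le> cmod (\<phi> (a - c) b) + cmod (\<phi> c (b - d))" by (simp add: norm_triangle_ineq)
  thus ?thesis using CS[OF cq P, of "a - c" b] CS[OF cq P, of c "b - d"] by linarith
qed

lemma pc_bounded: assumes "pc \<phi> s" obtains K where "K > 0" "\<And>n. pn \<phi> (s n) \<le> K"
proof -
  have "Cauchy (\<lambda>n. pn \<phi> (s n))"
    unfolding Cauchy_def dist_real_def
  proof (intro allI impI)
    fix e :: real assume "e > 0"
    then obtain N where N: "\<forall>m\<ge>N. \<forall>n\<ge>N. pn \<phi> (s m - s n) < e" using pcD[OF assms] by blast
    show "\<exists>M. \<forall>m\<ge>M. \<forall>n\<ge>M. \<bar>pn \<phi> (s m) - pn \<phi> (s n)\<bar> < e"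
      using N pn_rev_tri[OF cq P] by (meson order.strict_trans1)
  qed
  hence "Bseq (\<lambda>n. pn \<phi> (s n))" using Cauchy_convergent convergent_imp_Bseq by blast
  then obtain K where K: "K > 0" "\<forall>n. norm (pn \<phi> (s n)) \<le> K" using BseqE by blast
  have "\<forall>n. pn \<phi> (s n) \<le> K" using K(2) abs_ge_self order_trans by (metis real_norm_def)
  thus ?thesis using that K(1) by blast
qed

lemma pc_const: "pc \<phi> (\<lambda>n. x)"
  unfolding pc_def using pn_0[OF cq P] by auto

lemma pc_add: assumes "pc \<phi> s" "pc \<phi> t" shows "pc \<phi> (\<lambda>n. s n + t n)"
  unfolding pc_def
proof (intro allI impI)
  fix e :: real assume e: "e > 0"
  have e2: "e/2 > 0" using e by simp
  obtain N1 where N1: "\<forall>m\<ge>N1. \<forall>n\<ge>N1. pn \<phi> (s m - s n) < e/2" using pcD[OF assms(1) e2] by blast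
  obtain N2 where N2: "\<forall>m\<ge>N2. \<forall>n\<ge>N2. pn \<phi> (t m - t n) < e/2" using pcD[OF assms(2) e2] by blast
  show "\<exists>N. \<forall>m\<ge>N. \<forall>n\<ge>N. pn \<phi> (s m + t m - (s n + t n)) < e"
  proof (intro exI[of _ "max N1 N2"] allI impI)
    fix m n assume "max N1 N2 \<le> m" "max N1 N2 \<le> n"
    hence "pn \<phi> (s m - s n) < e/2" "pn \<phi> (t m - t n) < e/2" using N1 N2 by auto
    moreover have "pn \<phi> (s m + t m - (s n + t n)) \<le> pn \<phi> (s m - s n) + pn \<phi> (t m - t n)"
      using pn_add[OF cq P, of "s m - s n" "t m - t n"] by (simp add: algebra_simps)
    ultimately show "pn \<phi> (s m + t m - (s n + t n)) < e" by linarith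
  qed
qed

lemma pc_sc: assumes "pc \<phi> s" shows "pc \<phi> (\<lambda>n. cq_sc Q c (s n))"
  unfolding pc_def
proof (intro allI impI)
  fix e :: real assume e: "e > 0"
  have cpos: "cmod c + 1 > 0" by (smt (verit) norm_ge_zero)
  hence "e / (cmod c + 1) > 0" using e by simp
  then obtain N where N: "\<forall>m\<ge>N. \<forall>n\<ge>N. pn \<phi> (s m - s n) < e / (cmod c + 1)" using pcD[OF assms] by blast
  show "\<exists>N. \<forall>m\<ge>N. \<forall>n\<ge>N. pn \<phi> (cq_sc Q c (s m) - cq_sc Q c (s n)) < e"
  proof (intro exI[of _ N] allI impI)
    fix m n assume "N \<le> m" "N \<le> n"
    hence lt: "pn \<phi> (s m - s n) < e / (cmod c + 1)" using N by auto
    have "pn \<phi> (cq_sc Q c (s m) - cq_sc Q c (s n)) = cmod c * pn \<phi> (s m - s n)"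
      using pn_sc[OF cq P] cq_sc_diff[OF cq] by metis
    also have "\<dots> \<le> (cmod c + 1) * pn \<phi> (s m - s n)"
      using pn_nonneg[OF cq P] by (simp add: mult_right_mono)
    also have "\<dots> < (cmod c + 1) * (e / (cmod c + 1))"
      using lt cpos by (intro mult_strict_left_mono) auto
    also have "\<dots> = e" using cpos by (simp add: nonzero_mult_div_cancel_left)
    finally show "pn \<phi> (cq_sc Q c (s m) - cq_sc Q c (s n)) < e" .
  qed
qed

lemma pc_diff: assumes "pc \<phi> s" "pc \<phi> t" shows "pc \<phi> (\<lambda>n. s n - t n)"
  using pc_add[OF assms(1) pc_sc[OF assms(2), of "-1"]] cq_sc_m1[OF cq] by simp

lemma conv_ph: assumes "pc \<phi> s" "pc \<phi> t" shows "convergent (\<lambda>n. \<phi> (s n) (t n))"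
proof -
  obtain K1 where K1: "K1 > 0" "\<And>n. pn \<phi> (s n) \<le> K1" using pc_bounded[OF assms(1)] by blast
  obtain K2 where K2: "K2 > 0" "\<And>n. pn \<phi> (t n) \<le> K2" using pc_bounded[OF assms(2)] by blast
  define K where "K = K1 + K2"
  have K: "K > 0" "\<And>n. pn \<phi> (s n) \<le> K" "\<And>n. pn \<phi> (t n) \<le> K"
    using K1(1) K2(1) unfolding K_def apply simp
    using K1(2) K2(1) unfolding K_def apply (smt (verit))
    using K1(1) K2(2) unfolding K_def by (smt (verit))
  have "Cauchy (\<lambda>n. \<phi> (s n) (t n))"
    unfolding Cauchy_def dist_norm
  proof (intro allI impI)
    fix e :: real assume e: "e > 0"
    have e': "e / (4 * K) > 0" using e K by simp
    obtain N1 where N1: "\<forall>m\<ge>N1. \<forall>n\<ge>N1. pn \<phi> (s m - s n) < e / (4 * K)" using pcD[OF assms(1) e'] by blast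
    obtain N2 where N2: "\<forall>m\<ge>N2. \<forall>n\<ge>N2. pn \<phi> (t m - t n) < e / (4 * K)" using pcD[OF assms(2) e'] by blast
    show "\<exists>M. \<forall>m\<ge>M. \<forall>n\<ge>M. cmod (\<phi> (s m) (t m) - \<phi> (s n) (t n)) < e"
    proof (intro exI[of _ "max N1 N2"] allI impI)
      fix m n assume "max N1 N2 \<le> m" "max N1 N2 \<le> n"
      hence a: "pn \<phi> (s m - s n) \<le> e / (4 * K)" "pn \<phi> (t m - t n) \<le> e / (4 * K)"
        using N1 N2 by (auto intro: less_imp_le)
      have "cmod (\<phi> (s m) (t m) - \<phi> (s n) (t n)) \<le> pn \<phi> (s m - s n) * pn \<phi> (t m) + pn \<phi> (s n) * pn \<phi> (t m - t n)"
        by (rule diff_bound)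
      also have "\<dots> \<le> e / (4 * K) * K + K * (e / (4 * K))"
        using a K pn_nonneg[OF cq P] less_imp_le[OF e'] by (intro add_mono mult_mono) auto
      also have "\<dots> = e / 2" using K by (simp add: field_simps)
      finally show "cmod (\<phi> (s m) (t m) - \<phi> (s n) (t n)) < e" using e by linarith
    qed
  qed
  thus ?thesis using Cauchy_convergent by blast
qed

lemma repr_const: "repr \<phi> (\<lambda>n. x) (\<phi> x)"
  unfolding repr_def using pc_const by simp

lemma repr_add: "repr \<phi> s f \<Longrightarrow> repr \<phi> t g \<Longrightarrow> repr \<phi> (\<lambda>n. s n + t n) (hadd f g)"
  unfolding repr_def hadd_def using pc_add by (auto simp: ph_facts intro: tendsto_add)

lemma repr_sc: "repr \<phi> s f \<Longrightarrow> repr \<phi> (\<lambda>n. cq_sc Q c (s n)) (hscale c f)"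
  unfolding repr_def hscale_def using pc_sc by (auto simp: ph_facts intro: tendsto_mult)

lemma repr_diff: "repr \<phi> s f \<Longrightarrow> repr \<phi> t g \<Longrightarrow> repr \<phi> (\<lambda>n. s n - t n) (hadd f (hscale (-1) g))"
  using repr_add[OF _ repr_sc[of t g "-1"], of s f] cq_sc_m1[OF cq] by simp

lemma repr_unique: assumes "repr \<phi> s f" "repr \<phi> t f" shows "(\<lambda>n. pn \<phi> (s n - t n)) \<longlonglongrightarrow> 0"
proof -
  define d where "d n = s n - t n" for n
  have pd: "pc \<phi> d" unfolding d_def using pc_diff assms unfolding repr_def by blast
  have d0: "(\<lambda>n. \<phi> (d n) B) \<longlonglongrightarrow> 0" for B
  proof -
    have "(\<lambda>n. \<phi> (s n) B - \<phi> (t n) B) \<longlonglongrightarrow> f B - f B"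
      using assms unfolding repr_def by (intro tendsto_diff) auto
    thus ?thesis unfolding d_def by (simp add: ph_facts)
  qed
  obtain K where K: "K > 0" "\<And>n. pn \<phi> (d n) \<le> K" using pc_bounded[OF pd] by blast
  show ?thesis unfolding d_def[symmetric]
  proof (rule LIMSEQ_I)
    fix r :: real assume r: "r > 0"
    have e1: "r^2 / (2 * K) > 0" using r K by simp
    obtain N where N: "\<forall>m\<ge>N. \<forall>n\<ge>N. pn \<phi> (d m - d n) < r^2 / (2 * K)" using pcD[OF pd e1] by blast
    have "r^2 / 2 > 0" using r by simp
    then obtain N' where N': "\<forall>n\<ge>N'. norm (\<phi> (d n) (d N) - 0) < r^2 / 2"
      using LIMSEQ_D[OF d0[of "d N"]] by blast
    show "\<exists>no. \<forall>n\<ge>no. norm (pn \<phi> (d n) - 0) < r"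
    proof (intro exI[of _ "max N N'"] allI impI)
      fix n assume n: "max N N' \<le> n"
      have "\<phi> (d n) (d n) = \<phi> (d n) (d n - d N) + \<phi> (d n) (d N)" by (simp add: ph_facts)
      hence "cmod (\<phi> (d n) (d n)) \<le> cmod (\<phi> (d n) (d n - d N)) + cmod (\<phi> (d n) (d N))"
        by (metis norm_triangle_ineq)
      also have "\<dots> \<le> pn \<phi> (d n) * pn \<phi> (d n - d N) + cmod (\<phi> (d n) (d N))"
        using CS[OF cq P] by (simp add: add_mono)
      also have "\<dots> \<le> K * (r^2 / (2 * K)) + cmod (\<phi> (d n) (d N))"
        using K N n pn_nonneg[OF cq P] by (intro add_mono mult_mono) (auto intro: less_imp_le)
      also have "\<dots> < K * (r^2 / (2 * K)) + r^2 / 2" using N' n by simp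
      also have "\<dots> = r^2" using K by (simp add: field_simps)
      finally have "(pn \<phi> (d n))^2 < r^2"
        using pn_sq[OF cq P, of "d n"] complex_Re_le_cmod[of "\<phi> (d n) (d n)"] by linarith
      hence "pn \<phi> (d n) < r" using r pn_nonneg[OF cq P] by (simp add: power_less_imp_less_base)
      thus "norm (pn \<phi> (d n) - 0) < r" using pn_nonneg[OF cq P, of "d n"] by simp
    qed
  qed
qed

lemma IP_lim: assumes "repr \<phi> s f" "repr \<phi> t g" shows "(\<lambda>n. \<phi> (s n) (t n)) \<longlonglongrightarrow> IP \<phi> f g"
proof -
  have f: "f \<in> HH \<phi>" "g \<in> HH \<phi>" using assms unfolding HH_def by auto
  define s' where "s' = rs \<phi> f"
  define t' where "t' = rs \<phi> g"
  have r': "repr \<phi> s' f" "repr \<phi> t' g" unfolding s'_def t'_def using rs_repr f by auto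
  have "convergent (\<lambda>n. \<phi> (s' n) (t' n))" using conv_ph r' unfolding repr_def by blast
  hence L: "(\<lambda>n. \<phi> (s' n) (t' n)) \<longlonglongrightarrow> IP \<phi> f g"
    unfolding IP_def s'_def t'_def by (simp add: convergent_LIMSEQ_iff)
  obtain K1 where K1: "K1 > 0" "\<And>n. pn \<phi> (t n) \<le> K1" using pc_bounded assms(2) unfolding repr_def by blast
  obtain K2 where K2: "K2 > 0" "\<And>n. pn \<phi> (s' n) \<le> K2" using pc_bounded r'(1) unfolding repr_def by blast
  have u1: "(\<lambda>n. pn \<phi> (s n - s' n)) \<longlonglongrightarrow> 0" using repr_unique assms(1) r'(1) by blast
  have u2: "(\<lambda>n. pn \<phi> (t n - t' n)) \<longlonglongrightarrow> 0" using repr_unique assms(2) r'(2) by blast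
  have lim0: "(\<lambda>n. pn \<phi> (s n - s' n) * K1 + K2 * pn \<phi> (t n - t' n)) \<longlonglongrightarrow> 0"
    using tendsto_add[OF tendsto_mult[OF u1 tendsto_const[of K1]] tendsto_mult[OF tendsto_const[of K2] u2]] by simp
  have bnd: "\<forall>n. norm (\<phi> (s n) (t n) - \<phi> (s' n) (t' n)) \<le> pn \<phi> (s n - s' n) * K1 + K2 * pn \<phi> (t n - t' n)"
  proof
    fix n
    have "norm (\<phi> (s n) (t n) - \<phi> (s' n) (t' n)) \<le> pn \<phi> (s n - s' n) * pn \<phi> (t n) + pn \<phi> (s' n) * pn \<phi> (t n - t' n)"
      by (simp add: diff_bound)
    also have "\<dots> \<le> pn \<phi> (s n - s' n) * K1 + K2 * pn \<phi> (t n - t' n)"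
      using K1 K2 pn_nonneg[OF cq P] by (intro add_mono mult_mono) auto
    finally show "norm (\<phi> (s n) (t n) - \<phi> (s' n) (t' n)) \<le> pn \<phi> (s n - s' n) * K1 + K2 * pn \<phi> (t n - t' n)" .
  qed
  have "(\<lambda>n. \<phi> (s n) (t n) - \<phi> (s' n) (t' n)) \<longlonglongrightarrow> 0"
    using Lim_null_comparison[OF always_eventually[OF bnd] lim0] .
  from tendsto_add[OF this L] show ?thesis by simp
qed

lemma HN_lim: assumes "repr \<phi> s f" shows "(\<lambda>n. pn \<phi> (s n)) \<longlonglongrightarrow> hnorm (IP \<phi>) f"
  unfolding pn_def hnorm_def using tendsto_real_sqrt[OF tendsto_Re[OF IP_lim[OF assms assms]]] .

end



lemma inv_Suc_mono: "N \<le> k \<Longrightarrow> inverse (real (Suc k)) \<le> inverse (real (Suc N))"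
  by (rule le_imp_inverse_le) auto

lemma inv_Suc_small: assumes "(e::real) > 0" obtains N where "\<And>k. k \<ge> N \<Longrightarrow> inverse (real (Suc k)) < e"
proof -
  obtain N where "inverse (real (Suc N)) < e" using reals_Archimedean[OF assms] by auto
  thus ?thesis using that inv_Suc_mono by (meson order.strict_trans1)
qed

context
  fixes Q :: "('a::banach) cqs" and \<phi>
  assumes cq: "cq_algebra Q" and P: "\<phi> \<in> P_forms Q"
begin

lemmas ph_facts' = ph_facts[OF cq P]
lemmas pnn = pn_nonneg[OF cq P]

lemma hnorm_nonneg: "repr \<phi> s f \<Longrightarrow> 0 \<le> hnorm (IP \<phi>) f"
  using LIMSEQ_le_const[OF HN_lim[OF cq P]] pnn by blast

lemma pn_tri3: "pn \<phi> (a - d) \<le> pn \<phi> (a - b) + pn \<phi> (b - c) + pn \<phi> (c - d)"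
  using pn_diff_tri[OF cq P, of a d b] pn_diff_tri[OF cq P, of b d c] by linarith

lemma HH_complete:
  assumes s: "\<forall>n. s n \<in> HH \<phi>"
    and C: "\<forall>e>0. \<exists>N. \<forall>m\<ge>N. \<forall>n\<ge>N. hnorm (IP \<phi>) (hadd (s m) (hscale (-1) (s n))) < e"
  shows "\<exists>x\<in>HH \<phi>. (\<lambda>n. hnorm (IP \<phi>) (hadd (s n) (hscale (-1) x))) \<longlonglongrightarrow> 0"
proof -
  define r where "r k = rs \<phi> (s k)" for k
  have rr: "repr \<phi> (r k) (s k)" for k using rs_repr s r_def by auto
  have "\<exists>j. \<forall>n\<ge>j. pn \<phi> (r k n - r k j) < inverse (real (Suc k))" for k
  proof -
    obtain N where "\<forall>m\<ge>N. \<forall>n\<ge>N. pn \<phi> (r k m - r k n) < inverse (real (Suc k))"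
      using pcD[of \<phi> "r k" "inverse (real (Suc k))"] rr[of k] unfolding repr_def by auto
    thus ?thesis by blast
  qed
  then obtain j where j: "\<And>k n. n \<ge> j k \<Longrightarrow> pn \<phi> (r k n - r k (j k)) < inverse (real (Suc k))" by metis
  define a where "a k = r k (j k)" for k
  have hn: "(\<lambda>n. pn \<phi> (r k n - r l n)) \<longlonglongrightarrow> hnorm (IP \<phi>) (hadd (s k) (hscale (-1) (s l)))" for k l
    using HN_lim[OF cq P repr_diff[OF cq P rr rr]] .
  have A: "pn \<phi> (a k - a l) \<le> inverse (real (Suc k)) + hnorm (IP \<phi>) (hadd (s k) (hscale (-1) (s l))) + inverse (real (Suc l))" for k l
  proof (rule LIMSEQ_le_const[OF tendsto_add[OF tendsto_add[OF tendsto_const hn] tendsto_const]])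
    show "\<exists>N. \<forall>n\<ge>N. pn \<phi> (a k - a l) \<le> inverse (real (Suc k)) + pn \<phi> (r k n - r l n) + inverse (real (Suc l))"
    proof (intro exI[of _ "max (j k) (j l)"] allI impI)
      fix n assume "max (j k) (j l) \<le> n"
      then have "pn \<phi> (r k n - a k) < inverse (real (Suc k))" "pn \<phi> (r l n - a l) < inverse (real (Suc l))"
        using j a_def by auto
      moreover have "pn \<phi> (a k - a l) \<le> pn \<phi> (a k - r k n) + pn \<phi> (r k n - r l n) + pn \<phi> (r l n - a l)"
        by (rule pn_tri3)
      ultimately show "pn \<phi> (a k - a l) \<le> inverse (real (Suc k)) + pn \<phi> (r k n - r l n) + inverse (real (Suc l))"
        using pn_sym[OF cq P, of "a k" "r k n"] by linarith
    qed
  qed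
  have pca: "pc \<phi> a"
    unfolding pc_def
  proof (intro allI impI)
    fix e :: real assume e: "e > 0"
    hence e3: "e / 3 > 0" by simp
    obtain N1 where N1: "\<And>k. k \<ge> N1 \<Longrightarrow> inverse (real (Suc k)) < e / 3" using inv_Suc_small[OF e3] by blast
    obtain N2 where N2: "\<forall>m\<ge>N2. \<forall>n\<ge>N2. hnorm (IP \<phi>) (hadd (s m) (hscale (-1) (s n))) < e / 3"
      using C e3 by blast
    show "\<exists>N. \<forall>m\<ge>N. \<forall>n\<ge>N. pn \<phi> (a m - a n) < e"
    proof (intro exI[of _ "max N1 N2"] allI impI)
      fix m n assume "max N1 N2 \<le> m" "max N1 N2 \<le> n"
      hence "inverse (real (Suc m)) < e / 3" "inverse (real (Suc n)) < e / 3"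
        "hnorm (IP \<phi>) (hadd (s m) (hscale (-1) (s n))) < e / 3" using N1 N2 by auto
      thus "pn \<phi> (a m - a n) < e" using A[of m n] by linarith
    qed
  qed
  define f where "f B = lim (\<lambda>k. \<phi> (a k) B)" for B
  have ra: "repr \<phi> a f"
    unfolding repr_def
  proof (intro conjI pca allI)
    fix B
    have "convergent (\<lambda>k. \<phi> (a k) B)" using conv_ph[OF cq P pca pc_const[OF cq P]] by simp
    thus "(\<lambda>k. \<phi> (a k) B) \<longlonglongrightarrow> f B" unfolding f_def by (simp add: convergent_LIMSEQ_iff)
  qed
  have fH: "f \<in> HH \<phi>" using ra unfolding HH_def by blast
  have lim: "(\<lambda>n. hnorm (IP \<phi>) (hadd (s n) (hscale (-1) f))) \<longlonglongrightarrow> 0"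
  proof (rule LIMSEQ_I)
    fix e :: real assume e: "e > 0"
    hence e2: "e / 2 > 0" by simp
    obtain N1 where N1: "\<And>k. k \<ge> N1 \<Longrightarrow> inverse (real (Suc k)) < e / 2" using inv_Suc_small[OF e2] by blast
    obtain N2 where N2: "\<forall>m\<ge>N2. \<forall>n\<ge>N2. pn \<phi> (a m - a n) < e / 2" using pcD[OF pca e2] by blast
    show "\<exists>no. \<forall>k\<ge>no. norm (hnorm (IP \<phi>) (hadd (s k) (hscale (-1) f)) - 0) < e"
    proof (intro exI[of _ "max N1 N2"] allI impI)
      fix k assume k: "max N1 N2 \<le> k"
      have hl: "(\<lambda>n. pn \<phi> (r k n - a n)) \<longlonglongrightarrow> hnorm (IP \<phi>) (hadd (s k) (hscale (-1) f))"
        using HN_lim[OF cq P repr_diff[OF cq P rr ra]] .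
      have "hnorm (IP \<phi>) (hadd (s k) (hscale (-1) f)) \<le> inverse (real (Suc k)) + e / 2"
      proof (rule LIMSEQ_le_const2[OF hl], intro exI[of _ "max (j k) N2"] allI impI)
        fix n assume n: "max (j k) N2 \<le> n"
        have "pn \<phi> (r k n - a n) \<le> pn \<phi> (r k n - a k) + pn \<phi> (a k - a n)" by (rule pn_diff_tri[OF cq P])
        moreover have "pn \<phi> (r k n - a k) < inverse (real (Suc k))" using j[of k n] n a_def by auto
        moreover have "pn \<phi> (a k - a n) < e / 2" using N2 n k by auto
        ultimately show "pn \<phi> (r k n - a n) \<le> inverse (real (Suc k)) + e / 2" by linarith
      qed
      moreover have "inverse (real (Suc k)) < e / 2" using N1 k by auto
      moreover have "0 \<le> hnorm (IP \<phi>) (hadd (s k) (hscale (-1) f))"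
        using hnorm_nonneg[OF repr_diff[OF cq P rr ra]] .
      ultimately show "norm (hnorm (IP \<phi>) (hadd (s k) (hscale (-1) f)) - 0) < e" by simp
    qed
  qed
  show ?thesis using fH lim by blast
qed

lemma HH_dense: assumes "\<xi> \<in> HH \<phi>" "e > 0"
  shows "\<exists>A\<in>cq_A0 Q. hnorm (IP \<phi>) (hadd \<xi> (hscale (-1) (\<phi> A))) < e"
proof -
  define r where "r = rs \<phi> \<xi>"
  have rr: "repr \<phi> r \<xi>" using rs_repr assms(1) r_def by auto
  obtain C where C: "C > 0" "\<And>x. pn \<phi> x \<le> C * norm x" using pn_norm[OF cq P] by blast
  have e3: "e / 3 > 0" using assms(2) by simp
  obtain N where N: "\<forall>m\<ge>N. \<forall>n\<ge>N. pn \<phi> (r m - r n) < e / 3" using pcD[OF _ e3] rr unfolding repr_def by blast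
  have "r N \<in> closure (cq_A0 Q)" using cq_A0_facts(4)[OF cq] by simp
  moreover have "e / 3 / C > 0" using e3 C by simp
  ultimately obtain y where y: "y \<in> cq_A0 Q" "dist y (r N) < e / 3 / C" using closure_approachable by blast
  have py: "pn \<phi> (r N - y) < e / 3"
  proof -
    have "pn \<phi> (r N - y) \<le> C * norm (r N - y)" by (rule C(2))
    also have "\<dots> < C * (e / 3 / C)" using y(2) C(1)
      by (intro mult_strict_left_mono) (simp_all add: dist_norm norm_minus_commute)
    also have "\<dots> = e / 3" using C(1) by simp
    finally show ?thesis .
  qed
  have hl: "(\<lambda>n. pn \<phi> (r n - y)) \<longlonglongrightarrow> hnorm (IP \<phi>) (hadd \<xi> (hscale (-1) (\<phi> y)))"
    using HN_lim[OF cq P repr_diff[OF cq P rr repr_const[OF cq P]]] .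
  have "hnorm (IP \<phi>) (hadd \<xi> (hscale (-1) (\<phi> y))) \<le> 2 * e / 3"
  proof (rule LIMSEQ_le_const2[OF hl], intro exI[of _ N] allI impI)
    fix n assume n: "N \<le> n"
    have "pn \<phi> (r n - y) \<le> pn \<phi> (r n - r N) + pn \<phi> (r N - y)" by (rule pn_diff_tri[OF cq P])
    thus "pn \<phi> (r n - y) \<le> 2 * e / 3" using N n py by force
  qed
  thus ?thesis using y(1) assms(2) by force
qed

lemma IP_lim': "x \<in> HH \<phi> \<Longrightarrow> y \<in> HH \<phi> \<Longrightarrow> (\<lambda>n. \<phi> (rs \<phi> x n) (rs \<phi> y n)) \<longlonglongrightarrow> IP \<phi> x y"
  using IP_lim[OF cq P rs_repr rs_repr] by blast

lemma HH_hilbert: "complex_hilbert (HH \<phi>) (IP \<phi>)"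
proof -
  have hz: "hzero = \<phi> 0" unfolding hzero_def using ph_facts' by auto
  have hH: "hzero \<in> HH \<phi>" unfolding hz HH_def using repr_const[OF cq P] by blast
  have aH: "hadd x y \<in> HH \<phi>" if "x \<in> HH \<phi>" "y \<in> HH \<phi>" for x y
    using repr_add[OF cq P rs_repr[OF that(1)] rs_repr[OF that(2)]] unfolding HH_def by blast
  have sH: "hscale c x \<in> HH \<phi>" if "x \<in> HH \<phi>" for c x
    using repr_sc[OF cq P rs_repr[OF that(1)]] unfolding HH_def by blast
  have ipadd: "IP \<phi> (hadd x y) z = IP \<phi> x z + IP \<phi> y z" if "x \<in> HH \<phi>" "y \<in> HH \<phi>" "z \<in> HH \<phi>" for x y z
  proof -
    have "(\<lambda>n. \<phi> (rs \<phi> x n + rs \<phi> y n) (rs \<phi> z n)) \<longlonglongrightarrow> IP \<phi> (hadd x y) z"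
      using IP_lim[OF cq P repr_add[OF cq P rs_repr[OF that(1)] rs_repr[OF that(2)]] rs_repr[OF that(3)]] .
    moreover have "(\<lambda>n. \<phi> (rs \<phi> x n + rs \<phi> y n) (rs \<phi> z n)) \<longlonglongrightarrow> IP \<phi> x z + IP \<phi> y z"
      using tendsto_add[OF IP_lim'[OF that(1,3)] IP_lim'[OF that(2,3)]] by (simp add: ph_facts')
    ultimately show ?thesis using LIMSEQ_unique by blast
  qed
  have ipsc: "IP \<phi> (hscale c x) y = c * IP \<phi> x y" if "x \<in> HH \<phi>" "y \<in> HH \<phi>" for c x y
  proof -
    have "(\<lambda>n. \<phi> (cq_sc Q c (rs \<phi> x n)) (rs \<phi> y n)) \<longlonglongrightarrow> IP \<phi> (hscale c x) y"
      using IP_lim[OF cq P repr_sc[OF cq P rs_repr[OF that(1)]] rs_repr[OF that(2)]] .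
    moreover have "(\<lambda>n. \<phi> (cq_sc Q c (rs \<phi> x n)) (rs \<phi> y n)) \<longlonglongrightarrow> c * IP \<phi> x y"
      using tendsto_mult[OF tendsto_const IP_lim'[OF that(1,2)]] by (simp add: ph_facts')
    ultimately show ?thesis using LIMSEQ_unique by blast
  qed
  have ipcnj: "IP \<phi> x y = cnj (IP \<phi> y x)" if "x \<in> HH \<phi>" "y \<in> HH \<phi>" for x y
  proof -
    have e: "(\<lambda>n. \<phi> (rs \<phi> x n) (rs \<phi> y n)) = (\<lambda>n. cnj (\<phi> (rs \<phi> y n) (rs \<phi> x n)))"
      by (rule ext) (rule ph_herm[OF cq P])
    have "(\<lambda>n. \<phi> (rs \<phi> x n) (rs \<phi> y n)) \<longlonglongrightarrow> cnj (IP \<phi> y x)"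
      unfolding e using tendsto_cnj[OF IP_lim'[OF that(2,1)]] .
    thus ?thesis using LIMSEQ_unique IP_lim'[OF that] by blast
  qed
  have ippos: "0 \<le> IP \<phi> x x \<and> (IP \<phi> x x = 0 \<longrightarrow> x = hzero)" if "x \<in> HH \<phi>" for x
  proof -
    have L: "(\<lambda>n. \<phi> (rs \<phi> x n) (rs \<phi> x n)) \<longlonglongrightarrow> IP \<phi> x x" using IP_lim'[OF that that] .
    have "0 \<le> Re (IP \<phi> x x)" using LIMSEQ_le_const[OF tendsto_Re[OF L]] ph_Re[OF cq P] by blast
    moreover have "Im (IP \<phi> x x) = 0"
      using tendsto_Im[OF L] ph_Im[OF cq P] LIMSEQ_unique[OF tendsto_const] by fastforce
    moreover have "x = hzero" if z: "IP \<phi> x x = 0"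
    proof
      fix B
      have "(\<lambda>n. pn \<phi> (rs \<phi> x n)) \<longlonglongrightarrow> 0"
        using HN_lim[OF cq P rs_repr[OF \<open>x \<in> HH \<phi>\<close>]] z unfolding hnorm_def by simp
      hence "(\<lambda>n. pn \<phi> (rs \<phi> x n) * pn \<phi> B) \<longlonglongrightarrow> 0" using tendsto_mult_left_zero by blast
      hence "(\<lambda>n. \<phi> (rs \<phi> x n) B) \<longlonglongrightarrow> 0"
        using Lim_null_comparison[OF always_eventually] CS[OF cq P] by (metis (no_types, lifting))
      moreover have "(\<lambda>n. \<phi> (rs \<phi> x n) B) \<longlonglongrightarrow> x B" using rs_repr[OF \<open>x \<in> HH \<phi>\<close>] unfolding repr_def by blast
      ultimately show "x B = hzero B" unfolding hzero_def using LIMSEQ_unique by blast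
    qed
    ultimately show ?thesis by (simp add: less_eq_complex_def)
  qed
  show ?thesis unfolding complex_hilbert_def
    apply (intro conjI)
    subgoal by (rule hH)
    subgoal using aH by blast
    subgoal using sH by blast
    subgoal using ipadd by blast
    subgoal using ipsc by blast
    subgoal using ipcnj by blast
    subgoal using ippos by blast
    subgoal by (intro allI impI, elim conjE) (rule HH_complete)
    done
qed

end



definition RP :: "('a::banach) cqs \<Rightarrow> ('a \<Rightarrow> 'a \<Rightarrow> complex) \<Rightarrow> 'a \<Rightarrow> ('a \<Rightarrow> complex) \<Rightarrow> ('a \<Rightarrow> complex)" where
  "RP Q \<phi> X \<xi> = \<phi> (cq_mul Q X (SOME A. A \<in> cq_A0 Q \<and> \<phi> A = \<xi>))"

context
  fixes Q :: "('a::banach) cqs" and \<phi>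
  assumes cq: "cq_algebra Q" and P: "\<phi> \<in> P_forms Q"
begin

lemmas phf = ph_facts[OF cq P]

lemma W: assumes "A \<in> cq_A0 Q" "A' \<in> cq_A0 Q" "\<phi> A = \<phi> A'"
  shows "\<phi> (cq_mul Q X A) = \<phi> (cq_mul Q X A')"
proof
  fix B
  have "\<forall>B\<in>cq_A0 Q. \<phi> (cq_mul Q X A - cq_mul Q X A') B = 0"
  proof
    fix B assume B: "B \<in> cq_A0 Q"
    have "\<phi> (cq_mul Q X A - cq_mul Q X A') B = \<phi> (cq_mul Q X (A - A')) B"
      using mul_lin_diff[OF cq assms(1,2)] by simp
    also have "\<dots> = \<phi> (A - A') (cq_mul Q (cq_star Q X) B)"
      using ph_inv[OF cq P cq_A0_diff[OF cq assms(1,2)] B] .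
    also have "\<dots> = 0" using assms(3) by (simp add: phf)
    finally show "\<phi> (cq_mul Q X A - cq_mul Q X A') B = 0" .
  qed
  hence "\<phi> (cq_mul Q X A - cq_mul Q X A') B = 0" using ph_cont_zero[OF cq P] by blast
  thus "\<phi> (cq_mul Q X A) B = \<phi> (cq_mul Q X A') B" by (simp add: phf)
qed

lemma RP_eq: assumes "A \<in> cq_A0 Q" shows "RP Q \<phi> X (\<phi> A) = \<phi> (cq_mul Q X A)"
proof -
  define A' where "A' = (SOME A'. A' \<in> cq_A0 Q \<and> \<phi> A' = \<phi> A)"
  have "A' \<in> cq_A0 Q \<and> \<phi> A' = \<phi> A" unfolding A'_def using someI[where P="\<lambda>A'. A' \<in> cq_A0 Q \<and> \<phi> A' = \<phi> A"] assms by blast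
  hence h: "A' \<in> cq_A0 Q" "\<phi> A' = \<phi> A" by auto
  show ?thesis unfolding RP_def A'_def[symmetric] by (rule W[OF h(1) assms h(2)])
qed

lemma IP_const: "IP \<phi> (\<phi> x) (\<phi> y) = \<phi> x y"
  using LIMSEQ_unique[OF tendsto_const IP_lim[OF cq P repr_const[OF cq P, of x] repr_const[OF cq P, of y]]] by simp

lemma hadd_ph: "hadd (\<phi> A) (\<phi> B) = \<phi> (A + B)" unfolding hadd_def by (rule ext) (simp add: phf)
lemma hscale_ph: "hscale c (\<phi> A) = \<phi> (cq_sc Q c A)" unfolding hscale_def by (rule ext) (simp add: phf)

lemma gns_exists: "is_gns Q \<phi> (HH \<phi>) (IP \<phi>) \<phi> (RP Q \<phi>)"
  unfolding is_gns_def Let_def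
proof (intro conjI)
  show "complex_hilbert (HH \<phi>) (IP \<phi>)" by (rule HH_hilbert[OF cq P])
  show "\<forall>A\<in>cq_A0 Q. \<phi> A \<in> HH \<phi>" unfolding HH_def using repr_const[OF cq P] by blast
  show "\<forall>A\<in>cq_A0 Q. \<forall>B\<in>cq_A0 Q. \<phi> (A + B) = hadd (\<phi> A) (\<phi> B)" using hadd_ph by simp
  show "\<forall>c. \<forall>A\<in>cq_A0 Q. \<phi> (cq_sc Q c A) = hscale c (\<phi> A)" using hscale_ph by simp
  show "\<forall>\<xi>\<in>HH \<phi>. \<forall>e>0. \<exists>A\<in>cq_A0 Q. hnorm (IP \<phi>) (hadd \<xi> (hscale (- 1) (\<phi> A))) < e"
    by (intro ballI allI impI) (rule HH_dense[OF cq P])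
  show "\<forall>A\<in>cq_A0 Q. \<forall>B\<in>cq_A0 Q. IP \<phi> (\<phi> A) (\<phi> B) = \<phi> A B" using IP_const by simp
  show "\<forall>X. \<forall>\<xi>\<in>\<phi> ` cq_A0 Q. RP Q \<phi> X \<xi> \<in> HH \<phi>"
  proof (intro allI ballI)
    fix X \<xi> assume "\<xi> \<in> \<phi> ` cq_A0 Q"
    then obtain A where A: "A \<in> cq_A0 Q" "\<xi> = \<phi> A" by blast
    show "RP Q \<phi> X \<xi> \<in> HH \<phi>" unfolding HH_def A RP_eq[OF A(1)] using repr_const[OF cq P] by blast
  qed
  show "\<forall>X. \<forall>\<xi>\<in>\<phi> ` cq_A0 Q. \<forall>\<eta>\<in>\<phi> ` cq_A0 Q. RP Q \<phi> X (hadd \<xi> \<eta>) = hadd (RP Q \<phi> X \<xi>) (RP Q \<phi> X \<eta>)"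
  proof (intro allI ballI)
    fix X \<xi> \<eta> assume "\<xi> \<in> \<phi> ` cq_A0 Q" "\<eta> \<in> \<phi> ` cq_A0 Q"
    then obtain A B where AB: "A \<in> cq_A0 Q" "B \<in> cq_A0 Q" "\<xi> = \<phi> A" "\<eta> = \<phi> B" by blast
    show "RP Q \<phi> X (hadd \<xi> \<eta>) = hadd (RP Q \<phi> X \<xi>) (RP Q \<phi> X \<eta>)"
      unfolding AB hadd_ph RP_eq[OF AB(1)] RP_eq[OF AB(2)] RP_eq[OF cq_A0_facts(2)[OF cq AB(1,2)]]
        mul_lin_add[OF cq AB(1,2)] by (rule refl)
  qed
  show "\<forall>X c. \<forall>\<xi>\<in>\<phi> ` cq_A0 Q. RP Q \<phi> X (hscale c \<xi>) = hscale c (RP Q \<phi> X \<xi>)"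
  proof (intro allI ballI)
    fix X c \<xi> assume "\<xi> \<in> \<phi> ` cq_A0 Q"
    then obtain A where A: "A \<in> cq_A0 Q" "\<xi> = \<phi> A" by blast
    show "RP Q \<phi> X (hscale c \<xi>) = hscale c (RP Q \<phi> X \<xi>)"
      unfolding A hscale_ph RP_eq[OF A(1)] RP_eq[OF cq_A0_facts(3)[OF cq A(1)]] mul_lin_sc[OF cq A(1)] by (rule refl)
  qed
  show "\<forall>X Y. \<forall>A\<in>cq_A0 Q. \<forall>B\<in>cq_A0 Q. IP \<phi> (RP Q \<phi> X (\<phi> A)) (RP Q \<phi> Y (\<phi> B)) = \<phi> (cq_mul Q X A) (cq_mul Q Y B)"
  proof (intro allI ballI)
    fix X Y A B assume A: "A \<in> cq_A0 Q" and B: "B \<in> cq_A0 Q"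
    show "IP \<phi> (RP Q \<phi> X (\<phi> A)) (RP Q \<phi> Y (\<phi> B)) = \<phi> (cq_mul Q X A) (cq_mul Q Y B)"
      unfolding RP_eq[OF A] RP_eq[OF B] by (rule IP_const)
  qed
  show "\<forall>X. \<forall>A\<in>cq_A0 Q. \<forall>B\<in>cq_A0 Q. IP \<phi> (RP Q \<phi> X (\<phi> A)) (\<phi> B) = \<phi> (cq_mul Q X A) B"
  proof (intro allI ballI)
    fix X A B assume A: "A \<in> cq_A0 Q" and B: "B \<in> cq_A0 Q"
    show "IP \<phi> (RP Q \<phi> X (\<phi> A)) (\<phi> B) = \<phi> (cq_mul Q X A) B"
      unfolding RP_eq[OF A] by (rule IP_const)
  qed
qed

lemma gns_kernel: assumes A: "A \<in> cq_A0 Q" "0 < \<phi> A A"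
  and E: "\<forall>B\<in>cq_A0 Q. \<phi> (cq_mul Q X A - cq_sc Q \<alpha> A) B = 0"
  shows "gns_ker Q \<phi> (RP Q \<phi>) X \<alpha> \<noteq> {hzero}"
proof -
  have "RP Q \<phi> X (\<phi> A) = hscale \<alpha> (\<phi> A)"
    unfolding RP_eq[OF A(1)] hscale_ph
  proof
    fix B
    have "\<phi> (cq_mul Q X A - cq_sc Q \<alpha> A) B = 0" using ph_cont_zero[OF cq P E] .
    thus "\<phi> (cq_mul Q X A) B = \<phi> (cq_sc Q \<alpha> A) B" by (simp add: phf)
  qed
  hence mem: "\<phi> A \<in> gns_ker Q \<phi> (RP Q \<phi>) X \<alpha>" unfolding gns_ker_def using A(1) by blast
  have ne: "\<phi> A \<noteq> hzero"
  proof
    assume "\<phi> A = hzero"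
    hence "\<phi> A A = 0" using fun_cong[of "\<phi> A" hzero A] unfolding hzero_def by simp
    thus False using A(2) by simp
  qed
  show ?thesis
  proof
    assume "gns_ker Q \<phi> (RP Q \<phi>) X \<alpha> = {hzero}"
    hence "\<phi> A \<in> {hzero}" using mem by simp
    thus False using ne by simp
  qed
qed

end

lemma gns_to_eig:
  assumes cq: "cq_algebra Q" and P: "\<phi> \<in> P_forms Q"
    and g: "is_gns Q \<phi> H ip lam rep" and k: "gns_ker Q lam rep X \<alpha> \<noteq> {hzero}"
  shows "\<exists>A\<in>cq_A0 Q. 0 < \<phi> A A \<and> (\<forall>B\<in>cq_A0 Q. \<phi> (cq_mul Q X A - cq_sc Q \<alpha> A) B = 0)"
proof -
  have hil: "complex_hilbert H ip" using g unfolding is_gns_def Let_def by (elim conjE) assumption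
  have lamH: "\<forall>A\<in>cq_A0 Q. lam A \<in> H" using g unfolding is_gns_def Let_def by (elim conjE) assumption
  have lamsc: "\<forall>c. \<forall>A\<in>cq_A0 Q. lam (cq_sc Q c A) = hscale c (lam A)"
    using g unfolding is_gns_def Let_def by (elim conjE) assumption
  have ipl: "\<forall>A\<in>cq_A0 Q. \<forall>B\<in>cq_A0 Q. ip (lam A) (lam B) = \<phi> A B"
    using g unfolding is_gns_def Let_def by (elim conjE) assumption
  have repsc: "\<forall>X c. \<forall>\<xi>\<in>lam ` cq_A0 Q. rep X (hscale c \<xi>) = hscale c (rep X \<xi>)"
    using g unfolding is_gns_def Let_def by (elim conjE) assumption
  have repl: "\<forall>X. \<forall>A\<in>cq_A0 Q. \<forall>B\<in>cq_A0 Q. ip (rep X (lam A)) (lam B) = \<phi> (cq_mul Q X A) B"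
    using g unfolding is_gns_def Let_def by (elim conjE) assumption
  have ipsc: "\<forall>c. \<forall>x\<in>H. \<forall>y\<in>H. ip (hscale c x) y = c * ip x y"
    using hil unfolding complex_hilbert_def by (elim conjE) assumption
  have ippos: "\<forall>x\<in>H. 0 \<le> ip x x \<and> (ip x x = 0 \<longrightarrow> x = hzero)"
    using hil unfolding complex_hilbert_def by (elim conjE) assumption
  have z0: "0 \<in> cq_A0 Q" using cq_A0_facts(1)[OF cq] .
  have hs0: "hscale 0 f = hzero" for f :: "'a \<Rightarrow> complex" unfolding hscale_def hzero_def by simp
  have l0: "lam 0 = hzero"
  proof -
    have "lam 0 = lam (cq_sc Q 0 0)" using cq_sc_0[OF cq] by simp
    also have "\<dots> = hscale 0 (lam 0)" using lamsc z0 by blast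
    finally show ?thesis using hs0 by simp
  qed
  have "rep X hzero = hzero"
  proof -
    have "rep X hzero = rep X (hscale 0 (lam 0))" using l0 hs0 by simp
    also have "\<dots> = hscale 0 (rep X (lam 0))" using repsc z0 by blast
    finally show ?thesis using hs0 by simp
  qed
  moreover have "hscale \<alpha> hzero = hzero" unfolding hscale_def hzero_def by simp
  moreover have "hzero \<in> lam ` cq_A0 Q" using l0 z0 by (metis image_eqI)
  ultimately have "hzero \<in> gns_ker Q lam rep X \<alpha>" unfolding gns_ker_def by (metis (mono_tags, lifting) mem_Collect_eq)
  then obtain \<xi> where \<xi>: "\<xi> \<in> gns_ker Q lam rep X \<alpha>" "\<xi> \<noteq> hzero" using k by blast
  then obtain A where A: "A \<in> cq_A0 Q" "\<xi> = lam A" "rep X (lam A) = hscale \<alpha> (lam A)"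
    unfolding gns_ker_def by blast
  have lA: "lam A \<in> H" using lamH A(1) by blast
  have "0 \<le> \<phi> A A" "\<phi> A A \<noteq> 0"
    using ippos lA ipl A \<xi>(2) by auto
  hence pos: "0 < \<phi> A A" by (simp add: order.not_eq_order_implies_strict)
  have "\<phi> (cq_mul Q X A - cq_sc Q \<alpha> A) B = 0" if B: "B \<in> cq_A0 Q" for B
  proof -
    have lB: "lam B \<in> H" using lamH B by blast
    have "\<phi> (cq_mul Q X A - cq_sc Q \<alpha> A) B = \<phi> (cq_mul Q X A) B - \<alpha> * \<phi> A B"
      by (simp add: ph_diffL[OF cq P] ph_scL[OF cq P])
    also have "\<dots> = ip (rep X (lam A)) (lam B) - \<alpha> * ip (lam A) (lam B)"
      using repl ipl A(1) B by simp
    also have "\<dots> = 0" using A(3) ipsc lA lB by simp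
    finally show ?thesis .
  qed
  thus ?thesis using A(1) pos by blast
qed

theorem proposition4p11:
  fixes Q :: "('a::banach) cqs" and X :: 'a and \<alpha> :: complex
  assumes "cq_algebra Q" and "star_semisimple Q"
  shows "(gen_eigenvalue Q X \<alpha> \<longleftrightarrow>
           (\<exists>\<phi>\<in>P_forms Q. \<phi> \<noteq> (\<lambda>_ _. 0) \<and>
              (\<exists>A\<in>cq_A0 Q. 0 < \<phi> A A \<and>
                 \<phi> (cq_mul Q X A - cq_sc Q \<alpha> A) (cq_mul Q X A - cq_sc Q \<alpha> A) = 0))) \<and>
         (gen_eigenvalue Q X \<alpha> \<longleftrightarrow>
           (\<exists>\<phi>\<in>P_forms Q. \<phi> \<noteq> (\<lambda>_ _. 0) \<and>
              (\<exists>H ip lam rep. is_gns Q \<phi> H ip lam rep \<and> gns_ker Q lam rep X \<alpha> \<noteq> {hzero})))"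
proof -
  note cq = assms(1)
  have i_ii: "gen_eigenvalue Q X \<alpha> \<longleftrightarrow>
           (\<exists>\<phi>\<in>P_forms Q. \<phi> \<noteq> (\<lambda>_ _. 0) \<and>
              (\<exists>A\<in>cq_A0 Q. 0 < \<phi> A A \<and>
                 \<phi> (cq_mul Q X A - cq_sc Q \<alpha> A) (cq_mul Q X A - cq_sc Q \<alpha> A) = 0))"
  proof
    assume "gen_eigenvalue Q X \<alpha>"
    then obtain \<phi> A where \<phi>: "\<phi> \<in> P_forms Q" "\<phi> \<noteq> (\<lambda>_ _. 0)" "A \<in> cq_A0 Q" "0 < \<phi> A A"
      "\<forall>B\<in>cq_A0 Q. \<phi> (cq_mul Q X A - cq_sc Q \<alpha> A) B = 0"
      unfolding gen_eigenvalue_def by blast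
    have "\<phi> (cq_mul Q X A - cq_sc Q \<alpha> A) (cq_mul Q X A - cq_sc Q \<alpha> A) = 0"
      using ph_cont_zero[OF cq \<phi>(1) \<phi>(5)] .
    thus "\<exists>\<phi>\<in>P_forms Q. \<phi> \<noteq> (\<lambda>_ _. 0) \<and>
              (\<exists>A\<in>cq_A0 Q. 0 < \<phi> A A \<and>
                 \<phi> (cq_mul Q X A - cq_sc Q \<alpha> A) (cq_mul Q X A - cq_sc Q \<alpha> A) = 0)"
      using \<phi> by blast
  next
    assume "\<exists>\<phi>\<in>P_forms Q. \<phi> \<noteq> (\<lambda>_ _. 0) \<and>
              (\<exists>A\<in>cq_A0 Q. 0 < \<phi> A A \<and>
                 \<phi> (cq_mul Q X A - cq_sc Q \<alpha> A) (cq_mul Q X A - cq_sc Q \<alpha> A) = 0)"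
    then obtain \<phi> A where \<phi>: "\<phi> \<in> P_forms Q" "\<phi> \<noteq> (\<lambda>_ _. 0)" "A \<in> cq_A0 Q" "0 < \<phi> A A"
      "\<phi> (cq_mul Q X A - cq_sc Q \<alpha> A) (cq_mul Q X A - cq_sc Q \<alpha> A) = 0" by blast
    define Z where "Z = cq_mul Q X A - cq_sc Q \<alpha> A"
    have "pn \<phi> Z = 0" using \<phi>(5) unfolding pn_def Z_def by simp
    hence "\<forall>B\<in>cq_A0 Q. \<phi> Z B = 0" using CS[OF cq \<phi>(1), of Z] by simp
    thus "gen_eigenvalue Q X \<alpha>" unfolding gen_eigenvalue_def Z_def using \<phi> by blast
  qed
  have i_iii: "gen_eigenvalue Q X \<alpha> \<longleftrightarrow>
           (\<exists>\<phi>\<in>P_forms Q. \<phi> \<noteq> (\<lambda>_ _. 0) \<and>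
              (\<exists>H ip lam rep. is_gns Q \<phi> H ip lam rep \<and> gns_ker Q lam rep X \<alpha> \<noteq> {hzero}))"
  proof
    assume "gen_eigenvalue Q X \<alpha>"
    then obtain \<phi> A where \<phi>: "\<phi> \<in> P_forms Q" "\<phi> \<noteq> (\<lambda>_ _. 0)" "A \<in> cq_A0 Q" "0 < \<phi> A A"
      "\<forall>B\<in>cq_A0 Q. \<phi> (cq_mul Q X A - cq_sc Q \<alpha> A) B = 0"
      unfolding gen_eigenvalue_def by blast
    have "is_gns Q \<phi> (HH \<phi>) (IP \<phi>) \<phi> (RP Q \<phi>)" by (rule gns_exists[OF cq \<phi>(1)])
    moreover have "gns_ker Q \<phi> (RP Q \<phi>) X \<alpha> \<noteq> {hzero}" by (rule gns_kernel[OF cq \<phi>(1) \<phi>(3,4,5)])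
    ultimately show "\<exists>\<phi>\<in>P_forms Q. \<phi> \<noteq> (\<lambda>_ _. 0) \<and>
              (\<exists>H ip lam rep. is_gns Q \<phi> H ip lam rep \<and> gns_ker Q lam rep X \<alpha> \<noteq> {hzero})"
      using \<phi>(1,2) by blast
  next
    assume "\<exists>\<phi>\<in>P_forms Q. \<phi> \<noteq> (\<lambda>_ _. 0) \<and>
              (\<exists>H ip lam rep. is_gns Q \<phi> H ip lam rep \<and> gns_ker Q lam rep X \<alpha> \<noteq> {hzero})"
    then obtain \<phi> H ip lam rep where \<phi>: "\<phi> \<in> P_forms Q" "\<phi> \<noteq> (\<lambda>_ _. 0)"
      "is_gns Q \<phi> H ip lam rep" "gns_ker Q lam rep X \<alpha> \<noteq> {hzero}" by blast
    show "gen_eigenvalue Q X \<alpha>"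
      unfolding gen_eigenvalue_def using gns_to_eig[OF cq \<phi>(1,3,4)] \<phi>(1,2) by blast
  qed
  show ?thesis using i_ii i_iii by blast
qed



end
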